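(* For every integer $m \ge 3$, the graph $P_m \boxtimes K_2$ is a planar graph that is closed locally Dirac; in particular there are infinitely many planar closed locally Dirac graphs.
   Context: $P_m$ is the path on $m$ vertices and $K_2$ the complete graph on 2 vertices. The strong product $G \boxtimes H$ has vertex set $V(G)\times V(H)$, with $(u,v)$ adjacent to $(x,y)$ iff either $u=x$ and $vy \in E(H)$, or $v=y$ and $ux \in E(G)$, or $ux \in E(G)$ and $vy \in E(H)$. A graph $G$ is closed locally Dirac if for every vertex $v$, the subgraph $\langle N[v]\rangle$ induced by the closed neighbourhood $N[v]=N(v)\cup\{v\}$ satisfies Dirac's condition, i.e. every vertex of $\langle N[v]\rangle$ has degree in $\langle N[v]\rangle$ at least $|N[v]|/2$. *)

theory Defs
  imports "HOL-Analysis.Analysis"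
begin

text \<open>A simple graph is given by a vertex set V and an adjacency predicate adj,
  assumed symmetric and irreflexive (the concrete graphs below satisfy this).\<close>

definition strong_product ::
  "('a \<Rightarrow> 'a \<Rightarrow> bool) \<Rightarrow> ('b \<Rightarrow> 'b \<Rightarrow> bool) \<Rightarrow> ('a \<times> 'b) \<Rightarrow> ('a \<times> 'b) \<Rightarrow> bool" where
  "strong_product adjG adjH = (\<lambda>(u, v) (x, y).
      (u = x \<and> adjH v y) \<or> (v = y \<and> adjG u x) \<or> (adjG u x \<and> adjH v y))"

definition path_V :: "nat \<Rightarrow> nat set" where "path_V m = {0..<m}"
definition path_adj :: "nat \<Rightarrow> nat \<Rightarrow> bool" where "path_adj i j = (i = j + 1 \<or> j = i + 1)"
definition K2_V :: "nat set" where "K2_V = {0, 1}"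
definition K2_adj :: "nat \<Rightarrow> nat \<Rightarrow> bool" where "K2_adj i j = (i \<noteq> j)"

definition closed_nbhd :: "'a set \<Rightarrow> ('a \<Rightarrow> 'a \<Rightarrow> bool) \<Rightarrow> 'a \<Rightarrow> 'a set" where
  "closed_nbhd V adj v = {u \<in> V. adj v u} \<union> {v}"

definition dirac_induced :: "'a set \<Rightarrow> ('a \<Rightarrow> 'a \<Rightarrow> bool) \<Rightarrow> bool" where
  "dirac_induced S adj = (\<forall>x\<in>S. real (card {y \<in> S. adj x y}) \<ge> real (card S) / 2)"

definition closed_locally_dirac :: "'a set \<Rightarrow> ('a \<Rightarrow> 'a \<Rightarrow> bool) \<Rightarrow> bool" where
  "closed_locally_dirac V adj = (\<forall>v\<in>V. dirac_induced (closed_nbhd V adj v) adj)"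

definition graph_edges :: "'a set \<Rightarrow> ('a \<Rightarrow> 'a \<Rightarrow> bool) \<Rightarrow> 'a set set" where
  "graph_edges V adj = {{u, v} | u v. u \<in> V \<and> v \<in> V \<and> adj u v}"

definition planar :: "'a set \<Rightarrow> ('a \<Rightarrow> 'a \<Rightarrow> bool) \<Rightarrow> bool" where
  "planar V adj = (\<exists>(f :: 'a \<Rightarrow> real \<times> real) (\<gamma> :: 'a set \<Rightarrow> real \<Rightarrow> real \<times> real).
      inj_on f V \<and>
      (\<forall>e \<in> graph_edges V adj. (\<exists>u v. e = {u, v} \<and> arc (\<gamma> e) \<and>
            pathstart (\<gamma> e) = f u \<and> pathfinish (\<gamma> e) = f v) \<and>
          path_image (\<gamma> e) \<inter> f ` V \<subseteq> f ` e) \<and>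
      (\<forall>e \<in> graph_edges V adj. \<forall>e' \<in> graph_edges V adj. e \<noteq> e' \<longrightarrow>
          path_image (\<gamma> e) \<inter> path_image (\<gamma> e') \<subseteq> f ` (e \<inter> e')))"

end

theory Submission
  imports Defs
begin


definition M :: "real \<times> real \<Rightarrow> real \<times> real" where
  "M p = (- snd p / 4, fst p / 4)"
definition base :: "nat \<Rightarrow> real \<times> real" where
  "base b = (if b = 0 then (1,0) else (-1,1))"
definition pos :: "nat \<times> nat \<Rightarrow> real \<times> real" where
  "pos v = (M ^^ fst v) (base (snd v))"

lemma linear_M: "linear M"
  by (rule linearI) (auto simp: M_def)

lemma linear_Mp: "linear (M ^^ k)"
  proof (induction k)
  case 0 then show ?case by (simp add: linear_id[unfolded id_def])
next
  case (Suc k) then show ?case using linear_compose[OF Suc linear_M] by (simp add: o_def)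
qed

lemma seg_iff: "x \<in> closed_segment ((a::real),(b::real)) (c,d) \<longleftrightarrow>
   (\<exists>u. 0\<le>u \<and> u\<le>1 \<and> x = ((1-u)*a+u*c, (1-u)*b+u*d))"
  unfolding closed_segment_def by (simp add: conj_commute) blast

lemma pos_simps:
  "pos (0,0) = (1,0)" "pos (0,1) = (-1,1)"
  "pos (1,0) = (0,1/4)" "pos (1,1) = (-1/4,-1/4)"
  "pos (2,0) = (-1/16,0)" "pos (2,1) = (1/16,-1/16)"
  by (auto simp: pos_def base_def M_def numeral_eq_Suc)

lemma pos_simps2:
  "pos (0,Suc 0) = (-1,1)"
  "pos (Suc 0,0) = (0,1/4)" "pos (Suc 0,Suc 0) = (-1/4,-1/4)"
  "pos (Suc (Suc 0),0) = (-1/16,0)" "pos (Suc (Suc 0),Suc 0) = (1/16,-1/16)"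
  "pos (Suc (Suc (Suc 0)),0) = (0,-1/64)" "pos (Suc (Suc (Suc 0)),Suc 0) = (1/64,1/64)"
  by (auto simp: pos_def base_def M_def)

lemma nat01: "(b::nat) \<le> 1 \<Longrightarrow> b = 0 \<or> b = 1" by auto





lemma c01_0: "closed_segment (pos(0,0)) (pos(1,0)) \<inter> closed_segment (pos(1,0)) (pos(1+1,0)) \<subseteq> pos ` ({(0,0),(1,0)} \<inter> {(1,0),(1+1,0)})"
  apply ((simp add: pos_simps pos_simps2 del: subset_empty); (rule subsetI, erule IntE, simp only: seg_iff, elim exE conjE, hypsubst,
    simp only: prod.inject insert_iff empty_iff singleton_iff simp_thms, (argo)?))
  done

lemma c01_1: "closed_segment (pos(0,0)) (pos(1,0)) \<inter> closed_segment (pos(0,0)) (pos(0+0,1)) \<subseteq> pos ` ({(0,0),(1,0)} \<inter> {(0,0),(0+0,1)})"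
  apply ((simp add: pos_simps pos_simps2 del: subset_empty); (rule subsetI, erule IntE, simp only: seg_iff, elim exE conjE, hypsubst,
    simp only: prod.inject insert_iff empty_iff singleton_iff simp_thms, (argo)?))
  done

lemma c01_2: "closed_segment (pos(0,0)) (pos(1,0)) \<inter> closed_segment (pos(1,0)) (pos(1+0,1)) \<subseteq> pos ` ({(0,0),(1,0)} \<inter> {(1,0),(1+0,1)})"
  apply ((simp add: pos_simps pos_simps2 del: subset_empty); (rule subsetI, erule IntE, simp only: seg_iff, elim exE conjE, hypsubst,
    simp only: prod.inject insert_iff empty_iff singleton_iff simp_thms, (argo)?))
  done

lemma c01_3: "closed_segment (pos(0,0)) (pos(1,0)) \<inter> closed_segment (pos(0,0)) (pos(0+1,1)) \<subseteq> pos ` ({(0,0),(1,0)} \<inter> {(0,0),(0+1,1)})"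
  apply ((simp add: pos_simps pos_simps2 del: subset_empty); (rule subsetI, erule IntE, simp only: seg_iff, elim exE conjE, hypsubst,
    simp only: prod.inject insert_iff empty_iff singleton_iff simp_thms, (argo)?))
  done

lemma c01_4: "closed_segment (pos(0,0)) (pos(1,0)) \<inter> closed_segment (pos(1,0)) (pos(1+1,1)) \<subseteq> pos ` ({(0,0),(1,0)} \<inter> {(1,0),(1+1,1)})"
  apply ((simp add: pos_simps pos_simps2 del: subset_empty); (rule subsetI, erule IntE, simp only: seg_iff, elim exE conjE, hypsubst,
    simp only: prod.inject insert_iff empty_iff singleton_iff simp_thms, (argo)?))
  done

lemma c01_5: "closed_segment (pos(0,0)) (pos(1,0)) \<inter> closed_segment (pos(0,1)) (pos(0+0,0)) \<subseteq> pos ` ({(0,0),(1,0)} \<inter> {(0,1),(0+0,0)})"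
  apply ((simp add: pos_simps pos_simps2 del: subset_empty); (rule subsetI, erule IntE, simp only: seg_iff, elim exE conjE, hypsubst,
    simp only: prod.inject insert_iff empty_iff singleton_iff simp_thms, (argo)?))
  done

lemma c01_6: "closed_segment (pos(0,0)) (pos(1,0)) \<inter> closed_segment (pos(1,1)) (pos(1+0,0)) \<subseteq> pos ` ({(0,0),(1,0)} \<inter> {(1,1),(1+0,0)})"
  apply ((simp add: pos_simps pos_simps2 del: subset_empty); (rule subsetI, erule IntE, simp only: seg_iff, elim exE conjE, hypsubst,
    simp only: prod.inject insert_iff empty_iff singleton_iff simp_thms, (argo)?))
  done

lemma c01_7: "closed_segment (pos(0,0)) (pos(1,0)) \<inter> closed_segment (pos(0,1)) (pos(0+1,0)) \<subseteq> pos ` ({(0,0),(1,0)} \<inter> {(0,1),(0+1,0)})"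
  apply ((simp add: pos_simps pos_simps2 del: subset_empty); (rule subsetI, erule IntE, simp only: seg_iff, elim exE conjE, hypsubst,
    simp only: prod.inject insert_iff empty_iff singleton_iff simp_thms, (argo)?))
  done

lemma c01_8: "closed_segment (pos(0,0)) (pos(1,0)) \<inter> closed_segment (pos(1,1)) (pos(1+1,0)) \<subseteq> pos ` ({(0,0),(1,0)} \<inter> {(1,1),(1+1,0)})"
  apply ((simp add: pos_simps pos_simps2 del: subset_empty); (rule subsetI, erule IntE, simp only: seg_iff, elim exE conjE, hypsubst,
    simp only: prod.inject insert_iff empty_iff singleton_iff simp_thms, (argo)?))
  done

lemma c01_9: "closed_segment (pos(0,0)) (pos(1,0)) \<inter> closed_segment (pos(0,1)) (pos(0+1,1)) \<subseteq> pos ` ({(0,0),(1,0)} \<inter> {(0,1),(0+1,1)})"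
  apply ((simp add: pos_simps pos_simps2 del: subset_empty); (rule subsetI, erule IntE, simp only: seg_iff, elim exE conjE, hypsubst,
    simp only: prod.inject insert_iff empty_iff singleton_iff simp_thms, (argo)?))
  done

lemma c01_10: "closed_segment (pos(0,0)) (pos(1,0)) \<inter> closed_segment (pos(1,1)) (pos(1+1,1)) \<subseteq> pos ` ({(0,0),(1,0)} \<inter> {(1,1),(1+1,1)})"
  apply ((simp add: pos_simps pos_simps2 del: subset_empty); (rule subsetI, erule IntE, simp only: seg_iff, elim exE conjE, hypsubst,
    simp only: prod.inject insert_iff empty_iff singleton_iff simp_thms, (argo)?))
  done

lemma c01_11: "closed_segment (pos(0,0)) (pos(0,1)) \<inter> closed_segment (pos(0,0)) (pos(0+1,0)) \<subseteq> pos ` ({(0,0),(0,1)} \<inter> {(0,0),(0+1,0)})"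
  apply ((simp add: pos_simps pos_simps2 del: subset_empty); (rule subsetI, erule IntE, simp only: seg_iff, elim exE conjE, hypsubst,
    simp only: prod.inject insert_iff empty_iff singleton_iff simp_thms, (argo)?))
  done

lemma c01_12: "closed_segment (pos(0,0)) (pos(0,1)) \<inter> closed_segment (pos(1,0)) (pos(1+1,0)) \<subseteq> pos ` ({(0,0),(0,1)} \<inter> {(1,0),(1+1,0)})"
  apply ((simp add: pos_simps pos_simps2 del: subset_empty); (rule subsetI, erule IntE, simp only: seg_iff, elim exE conjE, hypsubst,
    simp only: prod.inject insert_iff empty_iff singleton_iff simp_thms, (argo)?))
  done

lemma c01_13: "closed_segment (pos(0,0)) (pos(1,1)) \<inter> closed_segment (pos(0,0)) (pos(0+1,0)) \<subseteq> pos ` ({(0,0),(1,1)} \<inter> {(0,0),(0+1,0)})"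
  apply ((simp add: pos_simps pos_simps2 del: subset_empty); (rule subsetI, erule IntE, simp only: seg_iff, elim exE conjE, hypsubst,
    simp only: prod.inject insert_iff empty_iff singleton_iff simp_thms, (argo)?))
  done

lemma c01_14: "closed_segment (pos(0,0)) (pos(1,1)) \<inter> closed_segment (pos(1,0)) (pos(1+1,0)) \<subseteq> pos ` ({(0,0),(1,1)} \<inter> {(1,0),(1+1,0)})"
  apply ((simp add: pos_simps pos_simps2 del: subset_empty); (rule subsetI, erule IntE, simp only: seg_iff, elim exE conjE, hypsubst,
    simp only: prod.inject insert_iff empty_iff singleton_iff simp_thms, (argo)?))
  done

lemma c01_15: "closed_segment (pos(0,0)) (pos(0,1)) \<inter> closed_segment (pos(1,0)) (pos(1+0,1)) \<subseteq> pos ` ({(0,0),(0,1)} \<inter> {(1,0),(1+0,1)})"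
  apply ((simp add: pos_simps pos_simps2 del: subset_empty); (rule subsetI, erule IntE, simp only: seg_iff, elim exE conjE, hypsubst,
    simp only: prod.inject insert_iff empty_iff singleton_iff simp_thms, (argo)?))
  done

lemma c01_16: "closed_segment (pos(0,0)) (pos(0,1)) \<inter> closed_segment (pos(0,0)) (pos(0+1,1)) \<subseteq> pos ` ({(0,0),(0,1)} \<inter> {(0,0),(0+1,1)})"
  apply ((simp add: pos_simps pos_simps2 del: subset_empty); (rule subsetI, erule IntE, simp only: seg_iff, elim exE conjE, hypsubst,
    simp only: prod.inject insert_iff empty_iff singleton_iff simp_thms, (argo)?))
  done

lemma c01_17: "closed_segment (pos(0,0)) (pos(0,1)) \<inter> closed_segment (pos(1,0)) (pos(1+1,1)) \<subseteq> pos ` ({(0,0),(0,1)} \<inter> {(1,0),(1+1,1)})"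
  apply ((simp add: pos_simps pos_simps2 del: subset_empty); (rule subsetI, erule IntE, simp only: seg_iff, elim exE conjE, hypsubst,
    simp only: prod.inject insert_iff empty_iff singleton_iff simp_thms, (argo)?))
  done

lemma c01_18: "closed_segment (pos(0,0)) (pos(1,1)) \<inter> closed_segment (pos(0,0)) (pos(0+0,1)) \<subseteq> pos ` ({(0,0),(1,1)} \<inter> {(0,0),(0+0,1)})"
  apply ((simp add: pos_simps pos_simps2 del: subset_empty); (rule subsetI, erule IntE, simp only: seg_iff, elim exE conjE, hypsubst,
    simp only: prod.inject insert_iff empty_iff singleton_iff simp_thms, (argo)?))
  done

lemma c01_19: "closed_segment (pos(0,0)) (pos(1,1)) \<inter> closed_segment (pos(1,0)) (pos(1+0,1)) \<subseteq> pos ` ({(0,0),(1,1)} \<inter> {(1,0),(1+0,1)})"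
  apply ((simp add: pos_simps pos_simps2 del: subset_empty); (rule subsetI, erule IntE, simp only: seg_iff, elim exE conjE, hypsubst,
    simp only: prod.inject insert_iff empty_iff singleton_iff simp_thms, (argo)?))
  done

lemma c01_20: "closed_segment (pos(0,0)) (pos(1,1)) \<inter> closed_segment (pos(1,0)) (pos(1+1,1)) \<subseteq> pos ` ({(0,0),(1,1)} \<inter> {(1,0),(1+1,1)})"
  apply ((simp add: pos_simps pos_simps2 del: subset_empty); (rule subsetI, erule IntE, simp only: seg_iff, elim exE conjE, hypsubst,
    simp only: prod.inject insert_iff empty_iff singleton_iff simp_thms, (argo)?))
  done

lemma c01_21: "closed_segment (pos(0,0)) (pos(0,1)) \<inter> closed_segment (pos(1,1)) (pos(1+0,0)) \<subseteq> pos ` ({(0,0),(0,1)} \<inter> {(1,1),(1+0,0)})"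
  apply ((simp add: pos_simps pos_simps2 del: subset_empty); (rule subsetI, erule IntE, simp only: seg_iff, elim exE conjE, hypsubst,
    simp only: prod.inject insert_iff empty_iff singleton_iff simp_thms, (argo)?))
  done

lemma c01_22: "closed_segment (pos(0,0)) (pos(0,1)) \<inter> closed_segment (pos(0,1)) (pos(0+1,0)) \<subseteq> pos ` ({(0,0),(0,1)} \<inter> {(0,1),(0+1,0)})"
  apply ((simp add: pos_simps pos_simps2 del: subset_empty); (rule subsetI, erule IntE, simp only: seg_iff, elim exE conjE, hypsubst,
    simp only: prod.inject insert_iff empty_iff singleton_iff simp_thms, (argo)?))
  done

lemma c01_23: "closed_segment (pos(0,0)) (pos(0,1)) \<inter> closed_segment (pos(1,1)) (pos(1+1,0)) \<subseteq> pos ` ({(0,0),(0,1)} \<inter> {(1,1),(1+1,0)})"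
  apply ((simp add: pos_simps pos_simps2 del: subset_empty); (rule subsetI, erule IntE, simp only: seg_iff, elim exE conjE, hypsubst,
    simp only: prod.inject insert_iff empty_iff singleton_iff simp_thms, (argo)?))
  done

lemma c01_24: "closed_segment (pos(0,0)) (pos(1,1)) \<inter> closed_segment (pos(0,1)) (pos(0+0,0)) \<subseteq> pos ` ({(0,0),(1,1)} \<inter> {(0,1),(0+0,0)})"
  apply ((simp add: pos_simps pos_simps2 del: subset_empty); (rule subsetI, erule IntE, simp only: seg_iff, elim exE conjE, hypsubst,
    simp only: prod.inject insert_iff empty_iff singleton_iff simp_thms, (argo)?))
  done

lemma c01_25: "closed_segment (pos(0,0)) (pos(1,1)) \<inter> closed_segment (pos(1,1)) (pos(1+0,0)) \<subseteq> pos ` ({(0,0),(1,1)} \<inter> {(1,1),(1+0,0)})"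
  apply ((simp add: pos_simps pos_simps2 del: subset_empty); (rule subsetI, erule IntE, simp only: seg_iff, elim exE conjE, hypsubst,
    simp only: prod.inject insert_iff empty_iff singleton_iff simp_thms, (argo)?))
  done

lemma c01_26: "closed_segment (pos(0,0)) (pos(1,1)) \<inter> closed_segment (pos(0,1)) (pos(0+1,0)) \<subseteq> pos ` ({(0,0),(1,1)} \<inter> {(0,1),(0+1,0)})"
  apply ((simp add: pos_simps pos_simps2 del: subset_empty); (rule subsetI, erule IntE, simp only: seg_iff, elim exE conjE, hypsubst,
    simp only: prod.inject insert_iff empty_iff singleton_iff simp_thms, (argo)?))
  done

lemma c01_27: "closed_segment (pos(0,0)) (pos(1,1)) \<inter> closed_segment (pos(1,1)) (pos(1+1,0)) \<subseteq> pos ` ({(0,0),(1,1)} \<inter> {(1,1),(1+1,0)})"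
  apply ((simp add: pos_simps pos_simps2 del: subset_empty); (rule subsetI, erule IntE, simp only: seg_iff, elim exE conjE, hypsubst,
    simp only: prod.inject insert_iff empty_iff singleton_iff simp_thms, (argo)?))
  done

lemma c01_28: "closed_segment (pos(0,0)) (pos(0,1)) \<inter> closed_segment (pos(0,1)) (pos(0+1,1)) \<subseteq> pos ` ({(0,0),(0,1)} \<inter> {(0,1),(0+1,1)})"
  apply ((simp add: pos_simps pos_simps2 del: subset_empty); (rule subsetI, erule IntE, simp only: seg_iff, elim exE conjE, hypsubst,
    simp only: prod.inject insert_iff empty_iff singleton_iff simp_thms, (argo)?))
  done

lemma c01_29: "closed_segment (pos(0,0)) (pos(0,1)) \<inter> closed_segment (pos(1,1)) (pos(1+1,1)) \<subseteq> pos ` ({(0,0),(0,1)} \<inter> {(1,1),(1+1,1)})"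
  apply ((simp add: pos_simps pos_simps2 del: subset_empty); (rule subsetI, erule IntE, simp only: seg_iff, elim exE conjE, hypsubst,
    simp only: prod.inject insert_iff empty_iff singleton_iff simp_thms, (argo)?))
  done

lemma c01_30: "closed_segment (pos(0,0)) (pos(1,1)) \<inter> closed_segment (pos(0,1)) (pos(0+1,1)) \<subseteq> pos ` ({(0,0),(1,1)} \<inter> {(0,1),(0+1,1)})"
  apply ((simp add: pos_simps pos_simps2 del: subset_empty); (rule subsetI, erule IntE, simp only: seg_iff, elim exE conjE, hypsubst,
    simp only: prod.inject insert_iff empty_iff singleton_iff simp_thms, (argo)?))
  done

lemma c01_31: "closed_segment (pos(0,0)) (pos(1,1)) \<inter> closed_segment (pos(1,1)) (pos(1+1,1)) \<subseteq> pos ` ({(0,0),(1,1)} \<inter> {(1,1),(1+1,1)})"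
  apply ((simp add: pos_simps pos_simps2 del: subset_empty); (rule subsetI, erule IntE, simp only: seg_iff, elim exE conjE, hypsubst,
    simp only: prod.inject insert_iff empty_iff singleton_iff simp_thms, (argo)?))
  done

lemma c01_32: "closed_segment (pos(0,1)) (pos(0,0)) \<inter> closed_segment (pos(0,0)) (pos(0+1,0)) \<subseteq> pos ` ({(0,1),(0,0)} \<inter> {(0,0),(0+1,0)})"
  apply ((simp add: pos_simps pos_simps2 del: subset_empty); (rule subsetI, erule IntE, simp only: seg_iff, elim exE conjE, hypsubst,
    simp only: prod.inject insert_iff empty_iff singleton_iff simp_thms, (argo)?))
  done

lemma c01_33: "closed_segment (pos(0,1)) (pos(0,0)) \<inter> closed_segment (pos(1,0)) (pos(1+1,0)) \<subseteq> pos ` ({(0,1),(0,0)} \<inter> {(1,0),(1+1,0)})"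
  apply ((simp add: pos_simps pos_simps2 del: subset_empty); (rule subsetI, erule IntE, simp only: seg_iff, elim exE conjE, hypsubst,
    simp only: prod.inject insert_iff empty_iff singleton_iff simp_thms, (argo)?))
  done

lemma c01_34: "closed_segment (pos(0,1)) (pos(1,0)) \<inter> closed_segment (pos(0,0)) (pos(0+1,0)) \<subseteq> pos ` ({(0,1),(1,0)} \<inter> {(0,0),(0+1,0)})"
  apply ((simp add: pos_simps pos_simps2 del: subset_empty); (rule subsetI, erule IntE, simp only: seg_iff, elim exE conjE, hypsubst,
    simp only: prod.inject insert_iff empty_iff singleton_iff simp_thms, (argo)?))
  done

lemma c01_35: "closed_segment (pos(0,1)) (pos(1,0)) \<inter> closed_segment (pos(1,0)) (pos(1+1,0)) \<subseteq> pos ` ({(0,1),(1,0)} \<inter> {(1,0),(1+1,0)})"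
  apply ((simp add: pos_simps pos_simps2 del: subset_empty); (rule subsetI, erule IntE, simp only: seg_iff, elim exE conjE, hypsubst,
    simp only: prod.inject insert_iff empty_iff singleton_iff simp_thms, (argo)?))
  done

lemma c01_36: "closed_segment (pos(0,1)) (pos(0,0)) \<inter> closed_segment (pos(1,0)) (pos(1+0,1)) \<subseteq> pos ` ({(0,1),(0,0)} \<inter> {(1,0),(1+0,1)})"
  apply ((simp add: pos_simps pos_simps2 del: subset_empty); (rule subsetI, erule IntE, simp only: seg_iff, elim exE conjE, hypsubst,
    simp only: prod.inject insert_iff empty_iff singleton_iff simp_thms, (argo)?))
  done

lemma c01_37: "closed_segment (pos(0,1)) (pos(0,0)) \<inter> closed_segment (pos(0,0)) (pos(0+1,1)) \<subseteq> pos ` ({(0,1),(0,0)} \<inter> {(0,0),(0+1,1)})"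
  apply ((simp add: pos_simps pos_simps2 del: subset_empty); (rule subsetI, erule IntE, simp only: seg_iff, elim exE conjE, hypsubst,
    simp only: prod.inject insert_iff empty_iff singleton_iff simp_thms, (argo)?))
  done

lemma c01_38: "closed_segment (pos(0,1)) (pos(0,0)) \<inter> closed_segment (pos(1,0)) (pos(1+1,1)) \<subseteq> pos ` ({(0,1),(0,0)} \<inter> {(1,0),(1+1,1)})"
  apply ((simp add: pos_simps pos_simps2 del: subset_empty); (rule subsetI, erule IntE, simp only: seg_iff, elim exE conjE, hypsubst,
    simp only: prod.inject insert_iff empty_iff singleton_iff simp_thms, (argo)?))
  done

lemma c01_39: "closed_segment (pos(0,1)) (pos(1,0)) \<inter> closed_segment (pos(0,0)) (pos(0+0,1)) \<subseteq> pos ` ({(0,1),(1,0)} \<inter> {(0,0),(0+0,1)})"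
  apply ((simp add: pos_simps pos_simps2 del: subset_empty); (rule subsetI, erule IntE, simp only: seg_iff, elim exE conjE, hypsubst,
    simp only: prod.inject insert_iff empty_iff singleton_iff simp_thms, (argo)?))
  done

lemma c01_40: "closed_segment (pos(0,1)) (pos(1,0)) \<inter> closed_segment (pos(1,0)) (pos(1+0,1)) \<subseteq> pos ` ({(0,1),(1,0)} \<inter> {(1,0),(1+0,1)})"
  apply ((simp add: pos_simps pos_simps2 del: subset_empty); (rule subsetI, erule IntE, simp only: seg_iff, elim exE conjE, hypsubst,
    simp only: prod.inject insert_iff empty_iff singleton_iff simp_thms, (argo)?))
  done

lemma c01_41: "closed_segment (pos(0,1)) (pos(1,0)) \<inter> closed_segment (pos(0,0)) (pos(0+1,1)) \<subseteq> pos ` ({(0,1),(1,0)} \<inter> {(0,0),(0+1,1)})"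
  apply ((simp add: pos_simps pos_simps2 del: subset_empty); (rule subsetI, erule IntE, simp only: seg_iff, elim exE conjE, hypsubst,
    simp only: prod.inject insert_iff empty_iff singleton_iff simp_thms, (argo)?))
  done

lemma c01_42: "closed_segment (pos(0,1)) (pos(1,0)) \<inter> closed_segment (pos(1,0)) (pos(1+1,1)) \<subseteq> pos ` ({(0,1),(1,0)} \<inter> {(1,0),(1+1,1)})"
  apply ((simp add: pos_simps pos_simps2 del: subset_empty); (rule subsetI, erule IntE, simp only: seg_iff, elim exE conjE, hypsubst,
    simp only: prod.inject insert_iff empty_iff singleton_iff simp_thms, (argo)?))
  done

lemma c01_43: "closed_segment (pos(0,1)) (pos(0,0)) \<inter> closed_segment (pos(1,1)) (pos(1+0,0)) \<subseteq> pos ` ({(0,1),(0,0)} \<inter> {(1,1),(1+0,0)})"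
  apply ((simp add: pos_simps pos_simps2 del: subset_empty); (rule subsetI, erule IntE, simp only: seg_iff, elim exE conjE, hypsubst,
    simp only: prod.inject insert_iff empty_iff singleton_iff simp_thms, (argo)?))
  done

lemma c01_44: "closed_segment (pos(0,1)) (pos(0,0)) \<inter> closed_segment (pos(0,1)) (pos(0+1,0)) \<subseteq> pos ` ({(0,1),(0,0)} \<inter> {(0,1),(0+1,0)})"
  apply ((simp add: pos_simps pos_simps2 del: subset_empty); (rule subsetI, erule IntE, simp only: seg_iff, elim exE conjE, hypsubst,
    simp only: prod.inject insert_iff empty_iff singleton_iff simp_thms, (argo)?))
  done

lemma c01_45: "closed_segment (pos(0,1)) (pos(0,0)) \<inter> closed_segment (pos(1,1)) (pos(1+1,0)) \<subseteq> pos ` ({(0,1),(0,0)} \<inter> {(1,1),(1+1,0)})"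
  apply ((simp add: pos_simps pos_simps2 del: subset_empty); (rule subsetI, erule IntE, simp only: seg_iff, elim exE conjE, hypsubst,
    simp only: prod.inject insert_iff empty_iff singleton_iff simp_thms, (argo)?))
  done

lemma c01_46: "closed_segment (pos(0,1)) (pos(1,0)) \<inter> closed_segment (pos(0,1)) (pos(0+0,0)) \<subseteq> pos ` ({(0,1),(1,0)} \<inter> {(0,1),(0+0,0)})"
  apply ((simp add: pos_simps pos_simps2 del: subset_empty); (rule subsetI, erule IntE, simp only: seg_iff, elim exE conjE, hypsubst,
    simp only: prod.inject insert_iff empty_iff singleton_iff simp_thms, (argo)?))
  done

lemma c01_47: "closed_segment (pos(0,1)) (pos(1,0)) \<inter> closed_segment (pos(1,1)) (pos(1+0,0)) \<subseteq> pos ` ({(0,1),(1,0)} \<inter> {(1,1),(1+0,0)})"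
  apply ((simp add: pos_simps pos_simps2 del: subset_empty); (rule subsetI, erule IntE, simp only: seg_iff, elim exE conjE, hypsubst,
    simp only: prod.inject insert_iff empty_iff singleton_iff simp_thms, (argo)?))
  done

lemma c01_48: "closed_segment (pos(0,1)) (pos(1,0)) \<inter> closed_segment (pos(1,1)) (pos(1+1,0)) \<subseteq> pos ` ({(0,1),(1,0)} \<inter> {(1,1),(1+1,0)})"
  apply ((simp add: pos_simps pos_simps2 del: subset_empty); (rule subsetI, erule IntE, simp only: seg_iff, elim exE conjE, hypsubst,
    simp only: prod.inject insert_iff empty_iff singleton_iff simp_thms, (argo)?))
  done

lemma c01_49: "closed_segment (pos(0,1)) (pos(0,0)) \<inter> closed_segment (pos(0,1)) (pos(0+1,1)) \<subseteq> pos ` ({(0,1),(0,0)} \<inter> {(0,1),(0+1,1)})"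
  apply ((simp add: pos_simps pos_simps2 del: subset_empty); (rule subsetI, erule IntE, simp only: seg_iff, elim exE conjE, hypsubst,
    simp only: prod.inject insert_iff empty_iff singleton_iff simp_thms, (argo)?))
  done

lemma c01_50: "closed_segment (pos(0,1)) (pos(0,0)) \<inter> closed_segment (pos(1,1)) (pos(1+1,1)) \<subseteq> pos ` ({(0,1),(0,0)} \<inter> {(1,1),(1+1,1)})"
  apply ((simp add: pos_simps pos_simps2 del: subset_empty); (rule subsetI, erule IntE, simp only: seg_iff, elim exE conjE, hypsubst,
    simp only: prod.inject insert_iff empty_iff singleton_iff simp_thms, (argo)?))
  done

lemma c01_51: "closed_segment (pos(0,1)) (pos(1,0)) \<inter> closed_segment (pos(0,1)) (pos(0+1,1)) \<subseteq> pos ` ({(0,1),(1,0)} \<inter> {(0,1),(0+1,1)})"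
  apply ((simp add: pos_simps pos_simps2 del: subset_empty); (rule subsetI, erule IntE, simp only: seg_iff, elim exE conjE, hypsubst,
    simp only: prod.inject insert_iff empty_iff singleton_iff simp_thms, (argo)?))
  done

lemma c01_52: "closed_segment (pos(0,1)) (pos(1,0)) \<inter> closed_segment (pos(1,1)) (pos(1+1,1)) \<subseteq> pos ` ({(0,1),(1,0)} \<inter> {(1,1),(1+1,1)})"
  apply ((simp add: pos_simps pos_simps2 del: subset_empty); (rule subsetI, erule IntE, simp only: seg_iff, elim exE conjE, hypsubst,
    simp only: prod.inject insert_iff empty_iff singleton_iff simp_thms, (argo)?))
  done

lemma c01_53: "closed_segment (pos(0,1)) (pos(1,1)) \<inter> closed_segment (pos(0,0)) (pos(0+1,0)) \<subseteq> pos ` ({(0,1),(1,1)} \<inter> {(0,0),(0+1,0)})"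
  apply ((simp add: pos_simps pos_simps2 del: subset_empty); (rule subsetI, erule IntE, simp only: seg_iff, elim exE conjE, hypsubst,
    simp only: prod.inject insert_iff empty_iff singleton_iff simp_thms, (argo)?))
  done

lemma c01_54: "closed_segment (pos(0,1)) (pos(1,1)) \<inter> closed_segment (pos(1,0)) (pos(1+1,0)) \<subseteq> pos ` ({(0,1),(1,1)} \<inter> {(1,0),(1+1,0)})"
  apply ((simp add: pos_simps pos_simps2 del: subset_empty); (rule subsetI, erule IntE, simp only: seg_iff, elim exE conjE, hypsubst,
    simp only: prod.inject insert_iff empty_iff singleton_iff simp_thms, (argo)?))
  done

lemma c01_55: "closed_segment (pos(0,1)) (pos(1,1)) \<inter> closed_segment (pos(0,0)) (pos(0+0,1)) \<subseteq> pos ` ({(0,1),(1,1)} \<inter> {(0,0),(0+0,1)})"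
  apply ((simp add: pos_simps pos_simps2 del: subset_empty); (rule subsetI, erule IntE, simp only: seg_iff, elim exE conjE, hypsubst,
    simp only: prod.inject insert_iff empty_iff singleton_iff simp_thms, (argo)?))
  done

lemma c01_56: "closed_segment (pos(0,1)) (pos(1,1)) \<inter> closed_segment (pos(1,0)) (pos(1+0,1)) \<subseteq> pos ` ({(0,1),(1,1)} \<inter> {(1,0),(1+0,1)})"
  apply ((simp add: pos_simps pos_simps2 del: subset_empty); (rule subsetI, erule IntE, simp only: seg_iff, elim exE conjE, hypsubst,
    simp only: prod.inject insert_iff empty_iff singleton_iff simp_thms, (argo)?))
  done

lemma c01_57: "closed_segment (pos(0,1)) (pos(1,1)) \<inter> closed_segment (pos(0,0)) (pos(0+1,1)) \<subseteq> pos ` ({(0,1),(1,1)} \<inter> {(0,0),(0+1,1)})"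
  apply ((simp add: pos_simps pos_simps2 del: subset_empty); (rule subsetI, erule IntE, simp only: seg_iff, elim exE conjE, hypsubst,
    simp only: prod.inject insert_iff empty_iff singleton_iff simp_thms, (argo)?))
  done

lemma c01_58: "closed_segment (pos(0,1)) (pos(1,1)) \<inter> closed_segment (pos(1,0)) (pos(1+1,1)) \<subseteq> pos ` ({(0,1),(1,1)} \<inter> {(1,0),(1+1,1)})"
  apply ((simp add: pos_simps pos_simps2 del: subset_empty); (rule subsetI, erule IntE, simp only: seg_iff, elim exE conjE, hypsubst,
    simp only: prod.inject insert_iff empty_iff singleton_iff simp_thms, (argo)?))
  done

lemma c01_59: "closed_segment (pos(0,1)) (pos(1,1)) \<inter> closed_segment (pos(0,1)) (pos(0+0,0)) \<subseteq> pos ` ({(0,1),(1,1)} \<inter> {(0,1),(0+0,0)})"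
  apply ((simp add: pos_simps pos_simps2 del: subset_empty); (rule subsetI, erule IntE, simp only: seg_iff, elim exE conjE, hypsubst,
    simp only: prod.inject insert_iff empty_iff singleton_iff simp_thms, (argo)?))
  done

lemma c01_60: "closed_segment (pos(0,1)) (pos(1,1)) \<inter> closed_segment (pos(1,1)) (pos(1+0,0)) \<subseteq> pos ` ({(0,1),(1,1)} \<inter> {(1,1),(1+0,0)})"
  apply ((simp add: pos_simps pos_simps2 del: subset_empty); (rule subsetI, erule IntE, simp only: seg_iff, elim exE conjE, hypsubst,
    simp only: prod.inject insert_iff empty_iff singleton_iff simp_thms, (argo)?))
  done

lemma c01_61: "closed_segment (pos(0,1)) (pos(1,1)) \<inter> closed_segment (pos(0,1)) (pos(0+1,0)) \<subseteq> pos ` ({(0,1),(1,1)} \<inter> {(0,1),(0+1,0)})"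
  apply ((simp add: pos_simps pos_simps2 del: subset_empty); (rule subsetI, erule IntE, simp only: seg_iff, elim exE conjE, hypsubst,
    simp only: prod.inject insert_iff empty_iff singleton_iff simp_thms, (argo)?))
  done

lemma c01_62: "closed_segment (pos(0,1)) (pos(1,1)) \<inter> closed_segment (pos(1,1)) (pos(1+1,0)) \<subseteq> pos ` ({(0,1),(1,1)} \<inter> {(1,1),(1+1,0)})"
  apply ((simp add: pos_simps pos_simps2 del: subset_empty); (rule subsetI, erule IntE, simp only: seg_iff, elim exE conjE, hypsubst,
    simp only: prod.inject insert_iff empty_iff singleton_iff simp_thms, (argo)?))
  done

lemma c01_63: "closed_segment (pos(0,1)) (pos(1,1)) \<inter> closed_segment (pos(1,1)) (pos(1+1,1)) \<subseteq> pos ` ({(0,1),(1,1)} \<inter> {(1,1),(1+1,1)})"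
  apply ((simp add: pos_simps pos_simps2 del: subset_empty); (rule subsetI, erule IntE, simp only: seg_iff, elim exE conjE, hypsubst,
    simp only: prod.inject insert_iff empty_iff singleton_iff simp_thms, (argo)?))
  done

lemmas cases01 = c01_0 c01_1 c01_2 c01_3 c01_4 c01_5 c01_6 c01_7 c01_8 c01_9 c01_10 c01_11 c01_12 c01_13 c01_14 c01_15 c01_16 c01_17 c01_18 c01_19 c01_20 c01_21 c01_22 c01_23 c01_24 c01_25 c01_26 c01_27 c01_28 c01_29 c01_30 c01_31 c01_32 c01_33 c01_34 c01_35 c01_36 c01_37 c01_38 c01_39 c01_40 c01_41 c01_42 c01_43 c01_44 c01_45 c01_46 c01_47 c01_48 c01_49 c01_50 c01_51 c01_52 c01_53 c01_54 c01_55 c01_56 c01_57 c01_58 c01_59 c01_60 c01_61 c01_62 c01_63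





lemma pos_simps3: "pos (3,0) = (0,-1/64)" "pos (3,1) = (1/64,1/64)"
  by (auto simp: pos_def base_def M_def numeral_eq_Suc)

lemma hull3_iff: "x \<in> convex hull {((a1::real),(a2::real)),(b1,b2),(c1,c2)} \<longleftrightarrow>
  (\<exists>u v w. 0\<le>u \<and> 0\<le>v \<and> 0\<le>w \<and> u+v+w=1 \<and> x = (u * a1 + v * b1 + w * c1, u * a2 + v * b2 + w * c2))"
  unfolding convex_hull_3 by auto

lemma h2_0: "closed_segment (pos(0,0)) (pos(0,1)) \<inter> convex hull {pos(2,0),pos(2,1),pos(3,1)} \<subseteq> {}"
  apply (simp only: pos_simps pos_simps3)
  apply (rule subsetI, erule IntE, simp only: seg_iff hull3_iff, elim exE conjE, hypsubst,
    simp only: prod.inject insert_iff empty_iff singleton_iff simp_thms)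
  apply argo
  done

lemma h2_1: "closed_segment (pos(0,0)) (pos(1,0)) \<inter> convex hull {pos(2,0),pos(2,1),pos(3,1)} \<subseteq> {}"
  apply (simp only: pos_simps pos_simps3)
  apply (rule subsetI, erule IntE, simp only: seg_iff hull3_iff, elim exE conjE, hypsubst,
    simp only: prod.inject insert_iff empty_iff singleton_iff simp_thms)
  apply argo
  done

lemma h2_2: "closed_segment (pos(0,0)) (pos(1,1)) \<inter> convex hull {pos(2,0),pos(2,1),pos(3,1)} \<subseteq> {}"
  apply (simp only: pos_simps pos_simps3)
  apply (rule subsetI, erule IntE, simp only: seg_iff hull3_iff, elim exE conjE, hypsubst,
    simp only: prod.inject insert_iff empty_iff singleton_iff simp_thms)
  apply argo
  done

lemma h2_3: "closed_segment (pos(0,1)) (pos(0,0)) \<inter> convex hull {pos(2,0),pos(2,1),pos(3,1)} \<subseteq> {}"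
  apply (simp only: pos_simps pos_simps3)
  apply (rule subsetI, erule IntE, simp only: seg_iff hull3_iff, elim exE conjE, hypsubst,
    simp only: prod.inject insert_iff empty_iff singleton_iff simp_thms)
  apply argo
  done

lemma h2_4: "closed_segment (pos(0,1)) (pos(1,0)) \<inter> convex hull {pos(2,0),pos(2,1),pos(3,1)} \<subseteq> {}"
  apply (simp only: pos_simps pos_simps3)
  apply (rule subsetI, erule IntE, simp only: seg_iff hull3_iff, elim exE conjE, hypsubst,
    simp only: prod.inject insert_iff empty_iff singleton_iff simp_thms)
  apply argo
  done

lemma h2_5: "closed_segment (pos(0,1)) (pos(1,1)) \<inter> convex hull {pos(2,0),pos(2,1),pos(3,1)} \<subseteq> {}"
  apply (simp only: pos_simps pos_simps3)
  apply (rule subsetI, erule IntE, simp only: seg_iff hull3_iff, elim exE conjE, hypsubst,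
    simp only: prod.inject insert_iff empty_iff singleton_iff simp_thms)
  apply argo
  done

lemmas cases2 = h2_0 h2_1 h2_2 h2_3 h2_4 h2_5


lemma base01:
 fixes b1 b2 c1 c2 o2 q2 d :: nat
 assumes "b1 \<le> 1" "b2 \<le> 1" "c1 \<le> 1" "c2 \<le> 1" "o2 \<le> 1" "q2 \<le> 1" "d \<le> 1"
   "(0,b1) \<noteq> (o2,b2)" "(d,c1) \<noteq> (d+q2,c2)" "{(0,b1),(o2,b2)} \<noteq> {(d,c1),(d+q2,c2)}"
 shows "closed_segment (pos(0,b1)) (pos(o2,b2)) \<inter> closed_segment (pos(d,c1)) (pos(d+q2,c2))
    \<subseteq> pos ` ({(0,b1),(o2,b2)} \<inter> {(d,c1),(d+q2,c2)})"
  using nat01[OF assms(1)] nat01[OF assms(2)] nat01[OF assms(3)] nat01[OF assms(4)]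
    nat01[OF assms(5)] nat01[OF assms(6)] nat01[OF assms(7)] assms(8-10)
  apply (elim disjE; (simp only:)?)
  apply (rule cases01 | (simp add: insert_commute; fail))+
  done


lemma pos_Suc: "M (pos (k,b)) = pos (Suc k, b)"
  by (simp add: pos_def)

lemma pos_add: "pos (d + q, b) = (M ^^ d) (pos (q, b))"
  by (simp add: pos_def funpow_add)

definition R0 :: "(real \<times> real) set" where
  "R0 = convex hull {pos(0,0), pos(0,1), pos(1,1)}"

lemma R0_mem: "pos (0,0) \<in> R0" "pos (0,1) \<in> R0" "pos (1,1) \<in> R0" "pos (1,0) \<in> R0" "pos (2,1) \<in> R0"
proof -
  show "pos (0,0) \<in> R0" "pos (0,1) \<in> R0" "pos (1,1) \<in> R0" unfolding R0_def by (auto intro: hull_inc)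
  show "pos (1,0) \<in> R0" unfolding R0_def pos_simps pos_simps2 hull3_iff
    by (rule exI[of _ "11/28"], rule exI[of _ "9/28"], rule exI[of _ "2/7"]) simp
  show "pos (2,1) \<in> R0" unfolding R0_def pos_simps pos_simps2 hull3_iff
    by (rule exI[of _ "17/56"], rule exI[of _ "5/56"], rule exI[of _ "17/28"]) simp
qed

lemma M_R0: "M ` R0 \<subseteq> R0"
proof -
  have "M ` R0 = convex hull {pos(1,0), pos(1,1), pos(2,1)}"
    unfolding R0_def convex_hull_linear_image[OF linear_M]
    by (simp add: pos_Suc numeral_2_eq_2)
  also have "\<dots> \<subseteq> R0"
    unfolding R0_def[symmetric] using R0_mem
    by (metis R0_def convex_convex_hull empty_subsetI hull_minimal insert_subset)
  finally show ?thesis .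
qed

lemma Mp_R0: "(M ^^ k) ` R0 \<subseteq> R0"
proof (induction k)
  case 0 then show ?case by simp
next
  case (Suc k)
  have "(M ^^ Suc k) ` R0 = M ` ((M ^^ k) ` R0)" by (simp add: image_comp)
  also have "\<dots> \<subseteq> M ` R0" using Suc by (rule image_mono)
  also have "\<dots> \<subseteq> R0" by (rule M_R0)
  finally show ?case .
qed

lemma M2_R0: "(M ^^ 2) ` R0 = convex hull {pos(2,0),pos(2,1),pos(3,1)}"
proof -
  have "(M ^^ 2) ` R0 = convex hull ((M ^^ 2) ` {pos(0,0), pos(0,1), pos(1,1)})"
    unfolding R0_def by (rule convex_hull_linear_image[OF linear_Mp])
  also have "(M ^^ 2) ` {pos(0,0), pos(0,1), pos(1,1)} = {pos(2,0),pos(2,1),pos(3,1)}"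
    using pos_add[of 2 0] pos_add[of 2 1] by (simp add: numeral_3_eq_3 numeral_2_eq_2)
  finally show ?thesis .
qed

lemma base2:
 fixes b1 b2 c1 c2 o2 q2 d :: nat
 assumes "b1 \<le> 1" "b2 \<le> 1" "c1 \<le> 1" "c2 \<le> 1" "o2 \<le> 1" "q2 \<le> 1" "d \<ge> 2"
   "(0,b1) \<noteq> (o2,b2)"
 shows "closed_segment (pos(0,b1)) (pos(o2,b2)) \<inter> closed_segment (pos(d,c1)) (pos(d+q2,c2))
    \<subseteq> pos ` ({(0,b1),(o2,b2)} \<inter> {(d,c1),(d+q2,c2)})"
proof -
  obtain k where dk: "d = 2 + k" using assms(7) le_Suc_ex by blast
  have "pos (q, c) \<in> R0" if "q \<le> 1" "c \<le> 1" for q c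
    using that R0_mem by (cases q; cases c) auto
  then have R: "pos (q, c) \<in> R0" if "q \<le> 1" "c \<le> 1" for q c using that by blast
  have gen: "pos (2 + k + q, c) \<in> (M ^^ 2) ` R0" if "q \<le> 1" "c \<le> 1" for q c
  proof -
    have "pos (2 + k + q, c) = (M ^^ 2) ((M ^^ k) (pos (q, c)))"
      by (simp add: pos_add[symmetric] add.assoc)
    moreover have "(M ^^ k) (pos (q, c)) \<in> R0" using Mp_R0[of k] R[OF that] by blast
    ultimately show ?thesis by blast
  qed
  have in1: "pos (d, c1) \<in> (M ^^ 2) ` R0" using gen[of 0 c1] assms(3) unfolding dk by simp
  have in2: "pos (d+q2, c2) \<in> (M ^^ 2) ` R0" using gen[of q2 c2] assms(4,6) unfolding dk by simp
  have "closed_segment (pos(d,c1)) (pos(d+q2,c2)) \<subseteq> convex hull {pos(2,0),pos(2,1),pos(3,1)}"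
    using in1 in2 unfolding M2_R0 by (intro closed_segment_subset) auto
  moreover have "closed_segment (pos(0,b1)) (pos(o2,b2)) \<inter> convex hull {pos(2,0),pos(2,1),pos(3,1)} \<subseteq> {}"
    using nat01[OF assms(1)] nat01[OF assms(2)] nat01[OF assms(5)] assms(8)
    apply (elim disjE; (simp only:)?)
    apply (rule cases2 | (simp; fail))+
    done
  ultimately show ?thesis by blast
qed





lemma inj_M: "inj M"
  by (rule injI) (auto simp: M_def prod_eq_iff)

lemma inj_Mp: "inj (M ^^ k)"
  using inj_M by simp

lemma shape_general:
  fixes b1 b2 c1 c2 o2 q2 i j :: nat
  assumes "b1 \<le> 1" "b2 \<le> 1" "c1 \<le> 1" "c2 \<le> 1" "o2 \<le> 1" "q2 \<le> 1" "i \<le> j"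
   "(i,b1) \<noteq> (i + o2,b2)" "(j,c1) \<noteq> (j+q2,c2)" "{(i,b1),(i + o2,b2)} \<noteq> {(j,c1),(j+q2,c2)}"
  shows "closed_segment (pos(i,b1)) (pos(i + o2,b2)) \<inter> closed_segment (pos(j,c1)) (pos(j+q2,c2))
    \<subseteq> pos ` ({(i,b1),(i + o2,b2)} \<inter> {(j,c1),(j+q2,c2)})"
proof
  fix x assume x: "x \<in> closed_segment (pos(i,b1)) (pos(i + o2,b2)) \<inter> closed_segment (pos(j,c1)) (pos(j+q2,c2))"
  obtain d where jd: "j = i + d" using assms(7) le_Suc_ex by blast
  define T where "T = M ^^ i"
  have lin: "linear T" unfolding T_def by (rule linear_Mp)
  have injT: "inj T" unfolding T_def by (rule inj_Mp)
  have pT: "pos (i + k, b) = T (pos (k, b))" for k b unfolding T_def by (rule pos_add)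
  have A: "(0,b1) \<noteq> (o2,b2)" using assms(8) by auto
  have B: "(d,c1) \<noteq> (d+q2,c2)" using assms(9) by auto
  have sh: "{(i+a1,a2),(i+a3,a4)} = {(i+e1,e2),(i+e3,e4)} \<Longrightarrow> {(a1,a2),(a3,a4)} = {(e1,e2),(e3,e4)}"
    for a1 a2 a3 a4 e1 e2 e3 e4 :: nat
    by (auto simp: doubleton_eq_iff)
  have C: "{(0,b1),(o2,b2)} \<noteq> {(d,c1),(d+q2,c2)}"
  proof
    assume "{(0,b1),(o2,b2)} = {(d,c1),(d+q2,c2)}"
    then have "{(i+0,b1),(i + o2,b2)} = {(i+d,c1),(i+(d+q2),c2)}"
      by (auto simp: doubleton_eq_iff)
    then show False using assms(10) jd by (simp add: add.assoc)
  qed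
  have L: "closed_segment (pos(0,b1)) (pos(o2,b2)) \<inter> closed_segment (pos(d,c1)) (pos(d+q2,c2))
    \<subseteq> pos ` ({(0,b1),(o2,b2)} \<inter> {(d,c1),(d+q2,c2)})"
  proof (cases "d \<le> 1")
    case True then show ?thesis using base01[OF assms(1-6) True A B C] by blast
  next
    case False then show ?thesis using base2[OF assms(1-6) _ A, of d] by simp
  qed
  have s1: "closed_segment (pos(i,b1)) (pos(i + o2,b2)) = T ` closed_segment (pos(0,b1)) (pos(o2,b2))"
    using pT[of 0 b1] pT[of o2 b2] closed_segment_linear_image[OF lin] by simp
  have s2: "closed_segment (pos(j,c1)) (pos(j+q2,c2)) = T ` closed_segment (pos(d,c1)) (pos(d+q2,c2))"
    using pT[of d c1] pT[of "d+q2" c2] closed_segment_linear_image[OF lin] jd by (simp add: add.assoc)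
  obtain y1 where y1: "y1 \<in> closed_segment (pos(0,b1)) (pos(o2,b2))" "x = T y1" using x s1 by auto
  obtain y2 where y2: "y2 \<in> closed_segment (pos(d,c1)) (pos(d+q2,c2))" "x = T y2" using x s2 by auto
  have "y1 = y2" using y1 y2 injT by (metis injD)
  then have "y1 \<in> pos ` ({(0,b1),(o2,b2)} \<inter> {(d,c1),(d+q2,c2)})" using L y1 y2 by blast
  then obtain w where w: "w \<in> {(0,b1),(o2,b2)} \<inter> {(d,c1),(d+q2,c2)}" "y1 = pos w" by blast
  have "x = pos (i + fst w, snd w)" using y1 w pT[of "fst w" "snd w"] by simp
  moreover have "(i + fst w, snd w) \<in> {(i,b1),(i + o2,b2)} \<inter> {(j,c1),(j+q2,c2)}"
    using w(1) jd by (auto simp: add.assoc)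
  ultimately show "x \<in> pos ` ({(i,b1),(i + o2,b2)} \<inter> {(j,c1),(j+q2,c2)})" by blast
qed




abbreviation "VV m \<equiv> path_V m \<times> K2_V"
abbreviation "AA \<equiv> strong_product path_adj K2_adj"

lemma adj_iff: "AA (i,b) (j,c) \<longleftrightarrow> (i = j \<and> b \<noteq> c) \<or> j = Suc i \<or> i = Suc j"
  by (auto simp: strong_product_def path_adj_def K2_adj_def)

lemma inV: "(i,b) \<in> VV m \<longleftrightarrow> i < m \<and> b \<le> 1"
  by (auto simp: path_V_def K2_V_def)

lemma nsq_pos: "fst (pos(k,b))^2 + snd (pos(k,b))^2 = (fst (base b)^2 + snd (base b)^2) / 16^k"
proof (induction k)
  case 0 then show ?case by (simp add: pos_def)
next
  case (Suc k)
  have "pos (Suc k, b) = M (pos (k,b))" by (simp add: pos_Suc)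
  then show ?case using Suc by (simp add: M_def power2_eq_square field_simps)
qed

lemma pow16_ne: "2 * (16::nat)^i \<noteq> 16^j"
proof (cases "j \<le> i")
  case True
  then have "(16::nat)^j \<le> 16^i" by (rule power_increasing) simp
  moreover have "(0::nat) < 16^i" by simp
  ultimately show ?thesis by linarith
next
  case False
  then obtain t where t: "j = Suc (i + t)" using less_imp_Suc_add[of i j] by auto
  have "(16::nat)^j = 16 * (16^i * 16^t)" unfolding t by (simp add: power_add)
  moreover have "(16::nat)^i * 16^t \<ge> 16^i" by simp
  ultimately have "(16::nat)^j \<ge> 16 * 16^i" by simp
  moreover have "(16::nat)^i > 0" by simp
  ultimately show ?thesis by linarith
qed

lemma pos_inj: assumes "b \<le> 1" "c \<le> 1" "pos (i,b) = pos (j,c)" shows "(i,b) = (j,c)"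
proof -
  have e: "(fst (base b)^2 + snd (base b)^2) / 16^i = (fst (base c)^2 + snd (base c)^2) / 16^j"
    using nsq_pos[of i b] nsq_pos[of j c] assms(3) by simp
  have bb: "fst (base b)^2 + snd (base b)^2 = (if b = 0 then 1 else 2)" for b
    by (simp add: base_def)
  have e2: "(if b = 0 then 1 else 2) * (16::real)^j = (if c = 0 then 1 else 2) * 16^i"
    using e unfolding bb by (simp add: field_simps split: if_splits)
  show ?thesis
  proof (cases "b = c")
    case True
    then have "(16::real)^j = 16^i" using e2 by (auto split: if_splits)
    then have "j = i" by (simp add: power_inject_exp)
    then show ?thesis using True by simp
  next
    case False
    then have "(b = 0 \<and> c = 1) \<or> (b = 1 \<and> c = 0)" using assms by auto
    then show ?thesis
    proof
      assume "b = 0 \<and> c = 1"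
      then have "real (16^j) = real (2 * 16^i)" using e2 by simp
      then have "(16::nat)^j = 2 * 16^i" by (simp only: of_nat_eq_iff)
      then show ?thesis using pow16_ne by metis
    next
      assume "b = 1 \<and> c = 0"
      then have "real (2 * 16^j) = real (16^i)" using e2 by simp
      then have "2 * (16::nat)^j = 16^i" by (simp only: of_nat_eq_iff)
      then show ?thesis using pow16_ne by metis
    qed
  qed
qed

lemma pos_inj_on: "inj_on pos (VV m)"
  by (rule inj_onI) (metis inV pos_inj surj_pair)

definition ends :: "(nat \<times> nat) set \<Rightarrow> (nat \<times> nat) \<times> (nat \<times> nat)" where
  "ends e = (SOME p. e = {fst p, snd p})"
definition gam :: "(nat \<times> nat) set \<Rightarrow> real \<Rightarrow> real \<times> real" where
  "gam e = linepath (pos (fst (ends e))) (pos (snd (ends e)))"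

lemma ends_ok: "e = {a,b} \<Longrightarrow> e = {fst (ends e), snd (ends e)}"
  unfolding ends_def by (rule someI[of "\<lambda>p. e = {fst p, snd p}" "(a,b)"]) simp

lemma gam_img: "e = {a,b} \<Longrightarrow> path_image (gam e) = closed_segment (pos a) (pos b)"
  using ends_ok[of e a b] unfolding gam_def
  by (auto simp: doubleton_eq_iff closed_segment_commute)

lemma edge_normal:
  assumes "u \<in> VV m" "v \<in> VV m" "AA u v"
  shows "\<exists>i b1 o2 b2. {u,v} = {(i,b1),(i + o2,b2)} \<and> b1 \<le> 1 \<and> b2 \<le> 1 \<and> o2 \<le> 1 \<and> (i,b1) \<noteq> (i + o2,b2)"
proof -
  obtain i b j c where uv: "u = (i,b)" "v = (j,c)" by (cases u, cases v) auto
  have bc: "b \<le> 1" "c \<le> 1" using assms(1,2) uv inV by auto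
  have a: "(i = j \<and> b \<noteq> c) \<or> j = Suc i \<or> i = Suc j" using assms(3) uv adj_iff by simp
  then show ?thesis
  proof (elim disjE)
    assume h: "i = j \<and> b \<noteq> c"
    show ?thesis by (rule exI[of _ i], rule exI[of _ b], rule exI[of _ 0], rule exI[of _ c]) (use h uv bc in auto)
  next
    assume h: "j = Suc i"
    show ?thesis by (rule exI[of _ i], rule exI[of _ b], rule exI[of _ 1], rule exI[of _ c]) (use h uv bc in auto)
  next
    assume h: "i = Suc j"
    show ?thesis by (rule exI[of _ j], rule exI[of _ c], rule exI[of _ 1], rule exI[of _ b]) (use h uv bc in auto)
  qed
qed

lemma edge_in: "e \<in> graph_edges V adj \<Longrightarrow> \<exists>u v. e = {u,v} \<and> u \<in> V \<and> v \<in> V \<and> adj u v"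
  unfolding graph_edges_def by blast

lemma pair_ok:
  assumes "e \<in> graph_edges (VV m) AA" "e' \<in> graph_edges (VV m) AA" "e \<noteq> e'"
  shows "path_image (gam e) \<inter> path_image (gam e') \<subseteq> pos ` (e \<inter> e')"
proof -
  obtain u v where uv: "e = {u,v}" "u \<in> VV m" "v \<in> VV m" "AA u v" using edge_in[OF assms(1)] by blast
  obtain u' v' where uv': "e' = {u',v'}" "u' \<in> VV m" "v' \<in> VV m" "AA u' v'" using edge_in[OF assms(2)] by blast
  obtain i b1 o2 b2 where n1: "e = {(i,b1),(i + o2,b2)}" "b1 \<le> 1" "b2 \<le> 1" "o2 \<le> 1" "(i,b1) \<noteq> (i + o2,b2)"
    using edge_normal[OF uv(2-4)] uv(1) by blast
  obtain j c1 q2 c2 where n2: "e' = {(j,c1),(j + q2,c2)}" "c1 \<le> 1" "c2 \<le> 1" "q2 \<le> 1" "(j,c1) \<noteq> (j + q2,c2)"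
    using edge_normal[OF uv'(2-4)] uv'(1) by blast
  show ?thesis
  proof (cases "i \<le> j")
    case True
    show ?thesis unfolding n1(1) n2(1) gam_img[OF refl]
      by (rule shape_general) (use n1 n2 True assms(3) in auto)
  next
    case False
    have "closed_segment (pos(j,c1)) (pos(j + q2,c2)) \<inter> closed_segment (pos(i,b1)) (pos(i + o2,b2))
      \<subseteq> pos ` ({(j,c1),(j + q2,c2)} \<inter> {(i,b1),(i + o2,b2)})"
      by (rule shape_general) (use n1 n2 False assms(3) in auto)
    then show ?thesis unfolding n1(1) n2(1) gam_img[OF refl]
      by (simp add: Int_commute)
  qed
qed

lemma planar_main: "planar (VV m) AA"
  unfolding planar_def
proof (rule exI[of _ pos], rule exI[of _ gam], intro conjI ballI impI)
  show "inj_on pos (VV m)" by (rule pos_inj_on)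
next
  fix e assume e: "e \<in> graph_edges (VV m) AA"
  obtain u v where uv: "e = {u,v}" "u \<in> VV m" "v \<in> VV m" "AA u v" using edge_in[OF e] by blast
  have uv_ne: "u \<noteq> v" using uv(4) by (cases u) (auto simp: adj_iff)
  have eo: "e = {fst (ends e), snd (ends e)}" by (rule ends_ok[OF uv(1)])
  have ne: "fst (ends e) \<noteq> snd (ends e)" using eo uv(1) uv_ne by (auto simp: doubleton_eq_iff)
  have inV2: "fst (ends e) \<in> VV m" "snd (ends e) \<in> VV m" using eo uv by (auto simp: doubleton_eq_iff)
  have "pos (fst (ends e)) \<noteq> pos (snd (ends e))"
    using ne inV2 pos_inj_on by (meson inj_on_contraD)
  then show "\<exists>u v. e = {u, v} \<and> arc (gam e) \<and> pathstart (gam e) = pos u \<and> pathfinish (gam e) = pos v"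
    using eo unfolding gam_def by (intro exI[of _ "fst (ends e)"] exI[of _ "snd (ends e)"]) auto
  show "path_image (gam e) \<inter> pos ` VV m \<subseteq> pos ` e"
  proof
    fix x assume x: "x \<in> path_image (gam e) \<inter> pos ` VV m"
    then obtain w where w: "w \<in> VV m" "x = pos w" by blast
    obtain k b where kb: "w = (k,b)" by (cases w)
    have kb2: "k < m" "b \<le> 1" using w(1) kb inV by auto
    define w' where "w' = (k, 1 - b)"
    have w'V: "w' \<in> VV m" using kb2 by (auto simp: w'_def path_V_def K2_V_def)
    have adjw: "AA w w'" using kb2 by (auto simp: kb w'_def adj_iff; arith)
    have e': "{w,w'} \<in> graph_edges (VV m) AA" unfolding graph_edges_def using w(1) w'V adjw by blast
    show "x \<in> pos ` e"
    proof (cases "w \<in> e")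
      case True then show ?thesis using w by blast
    next
      case False
      then have "e \<noteq> {w,w'}" by auto
      have "x \<in> path_image (gam {w,w'})" using w gam_img[of "{w,w'}" w w'] by simp
      then have "x \<in> pos ` (e \<inter> {w,w'})" using pair_ok[OF e e' \<open>e \<noteq> {w,w'}\<close>] x by blast
      then obtain z where z: "z \<in> e" "x = pos z" by blast
      have "z \<in> VV m" using z(1) uv by auto
      then have "z = w" using z w pos_inj_on by (metis inj_onD)
      then show ?thesis using z False by simp
    qed
  qed
next
  fix e e' assume "e \<in> graph_edges (VV m) AA" "e' \<in> graph_edges (VV m) AA" "e \<noteq> e'"
  then show "path_image (gam e) \<inter> path_image (gam e') \<subseteq> pos ` (e \<inter> e')" by (rule pair_ok)
qed




lemma finV: "finite (VV m)" by (simp add: path_V_def K2_V_def)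

lemma dirac_main: "closed_locally_dirac (VV m) AA"
  unfolding closed_locally_dirac_def dirac_induced_def
proof (intro ballI)
  fix v x assume v: "v \<in> VV m" and x: "x \<in> closed_nbhd (VV m) AA v"
  define S where "S = closed_nbhd (VV m) AA v"
  obtain i b where ib: "v = (i,b)" by (cases v)
  obtain j c where jc: "x = (j,c)" by (cases x)
  have ib2: "i < m" "b \<le> 1" using v ib inV by auto
  have S_iff: "y \<in> S \<longleftrightarrow> y \<in> VV m \<and> (AA v y \<or> y = v)" for y
    unfolding S_def closed_nbhd_def using v by auto
  have finS: "finite S" using finV[of m] S_iff by (meson finite_subset subsetI)
  have xS: "x \<in> S" using x S_def by simp
  have "x \<in> VV m" using xS S_iff by blast
  then have jc2: "j < m" "c \<le> 1" using jc by (auto simp: path_V_def K2_V_def)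
  have xv: "AA v x \<or> x = v" using xS S_iff by auto
  have Ssub: "S \<subseteq> {i - 1, i, Suc i} \<times> {0,1}"
  proof
    fix y assume y: "y \<in> S"
    obtain k d where kd: "y = (k,d)" by (cases y)
    have "y \<in> VV m" using y S_iff by blast
    then have "k < m" "d \<le> 1" using kd by (auto simp: path_V_def K2_V_def)
    moreover have "AA (i,b) (k,d) \<or> (k,d) = (i,b)" using y S_iff kd ib by auto
    ultimately show "y \<in> {i - 1, i, Suc i} \<times> {0,1}" unfolding kd adj_iff by auto
  qed
  have "card S \<le> card ({i - 1, i, Suc i} \<times> {0::nat,1})" by (rule card_mono[OF _ Ssub]) simp
  also have "\<dots> = card {i - 1, i, Suc i} * 2" by (simp only: card_cartesian_product) simp
  also have "card {i - 1, i, Suc i} \<le> 3" by (rule order_trans[OF card_insert_le_m1]) (auto intro: card_insert_le_m1)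
  then have "card {i - 1, i, Suc i} * 2 \<le> 6" by simp
  finally have cS: "card S \<le> 6" .
  have "real (card {y \<in> S. AA x y}) \<ge> real (card S) / 2"
  proof (cases "j = i")
    case True
    have sub: "S - {x} \<subseteq> {y \<in> S. AA x y}"
    proof
      fix y assume y: "y \<in> S - {x}"
      obtain k d where kd: "y = (k,d)" by (cases y)
      have "AA (i,b) (k,d) \<or> (k,d) = (i,b)" using y S_iff kd ib by auto
      then have "AA (i,c) (k,d)" using y kd jc True by (auto simp: adj_iff)
      then show "y \<in> {y \<in> S. AA x y}" using y kd jc True by auto
    qed
    have v2: "(i, 1 - b) \<in> S" using ib2 by (auto simp: S_iff ib path_V_def K2_V_def adj_iff)
    have vS: "v \<in> S" using v S_iff by auto
    have "v \<noteq> (i, 1 - b)" using ib2 ib by auto arith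
    then have "card {v, (i, 1-b)} = 2" by simp
    moreover have "card {v, (i, 1-b)} \<le> card S" using v2 vS finS by (intro card_mono) auto
    ultimately have c2: "card S \<ge> 2" by simp
    have "card (S - {x}) \<le> card {y \<in> S. AA x y}" using sub finS by (intro card_mono) auto
    moreover have "card (S - {x}) = card S - 1" using xS finS by simp
    ultimately show ?thesis using c2 by simp
  next
    case False
    then have ji: "j = Suc i \<or> i = Suc j" using xv ib jc by (auto simp: adj_iff)
    define T where "T = {(i,0),(i,1),(j,0),(j,1::nat)} - {x}"
    have "card {(i,0),(i,1),(j,0),(j,1::nat)} = 4" using False by simp
    then have cT: "card T = 3" using jc jc2 unfolding T_def by (cases "c = 0") (auto simp: card_Diff_singleton)
    have sub: "T \<subseteq> {y \<in> S. AA x y}"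
    proof
      fix y assume y: "y \<in> T"
      then have "y \<in> S" using ji ib2 jc2 ib unfolding T_def by (auto simp: S_iff path_V_def K2_V_def adj_iff)
      moreover have "AA x y" using y ji jc unfolding T_def by (auto simp: adj_iff)
      ultimately show "y \<in> {y \<in> S. AA x y}" by simp
    qed
    have "card T \<le> card {y \<in> S. AA x y}" using sub finS by (intro card_mono) auto
    then show ?thesis using cT cS by simp
  qed
  then show "real (card {y \<in> closed_nbhd (VV m) AA v. AA x y}) \<ge> real (card (closed_nbhd (VV m) AA v)) / 2"
    by (simp add: S_def)
qed



theorem mainTheorem7:
  fixes m :: nat
  assumes "m \<ge> 3"
  shows "planar (path_V m \<times> K2_V) (strong_product path_adj K2_adj) \<and>
         closed_locally_dirac (path_V m \<times> K2_V) (strong_product path_adj K2_adj)"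
  using planar_main[of m] dirac_main[of m] by simp

end
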